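(* (a) If $\mathbf b=(b_1,\dots,b_{k-1})$ is a perfect matching sequence, then $b_v\le v(k-v)$ for every $v=1,\dots,k-1$. (b) For every $1\le v\le k-1$, the sequence $$\mathbf b=(1,2,\dots,v-2,v-1,\ v(k-v),\ k-v-1,k-v-2,\dots,2,1)$$ (i.e. $b_i=i$ for $i<v$, $b_v=v(k-v)$, $b_i=k-i$ for $i>v$) is a perfect matching sequence.
   Context: Fix an integer $k\ge 2$. For a sequence $\mathbf b=(b_1,\dots,b_{k-1})$ of non-negative integers write $|\mathbf b|=\sum_i b_i$. The bipartite graph $\mathcal B_{\mathbf b}$ has upper vertex class $U=\{(j,l):1\le j\le l\le k-1\}$ and lower vertex class $D_{\mathbf b}=\{(i,t):1\le i\le k-1,\ 1\le t\le b_i\}$, with an edge between $(j,l)\in U$ and $(i,t)\in D_{\mathbf b}$ if and only if $j\le i\le l$. The sequence $\mathbf b$ is a matching sequence if $\mathcal B_{\mathbf b}$ has a matching covering all of $D_{\mathbf b}$, and a perfect matching sequence if moreover $|\mathbf b|=\binom k2$. *)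

theory Defs
  imports Main
begin

text \<open>Sequences b = (b_1,...,b_{k-1}) are represented as functions nat => nat;
  only the values at 1..k-1 matter.\<close>

definition upper_class :: "nat \<Rightarrow> (nat \<times> nat) set" where
  "upper_class k = {(j, l). 1 \<le> j \<and> j \<le> l \<and> l \<le> k - 1}"

definition lower_class :: "nat \<Rightarrow> (nat \<Rightarrow> nat) \<Rightarrow> (nat \<times> nat) set" where
  "lower_class k b = {(i, t). 1 \<le> i \<and> i \<le> k - 1 \<and> 1 \<le> t \<and> t \<le> b i}"

definition B_edge :: "nat \<times> nat \<Rightarrow> nat \<times> nat \<Rightarrow> bool" where
  "B_edge u d \<longleftrightarrow> fst u \<le> fst d \<and> fst d \<le> snd u"

text \<open>A matching of the bipartite graph covering all of the lower class is the same
  as an injective choice, for each lower vertex, of an adjacent upper vertex.\<close>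
definition matching_sequence :: "nat \<Rightarrow> (nat \<Rightarrow> nat) \<Rightarrow> bool" where
  "matching_sequence k b \<longleftrightarrow>
     (\<exists>f. inj_on f (lower_class k b) \<and>
          (\<forall>d \<in> lower_class k b. f d \<in> upper_class k \<and> B_edge (f d) d))"

definition perfect_matching_sequence :: "nat \<Rightarrow> (nat \<Rightarrow> nat) \<Rightarrow> bool" where
  "perfect_matching_sequence k b \<longleftrightarrow>
     matching_sequence k b \<and> (\<Sum>i = 1..k - 1. b i) = k choose 2"

end

theory Submission
  imports Defs
begin

lemma partA:
  assumes m: "matching_sequence k b" and v: "v \<in> {1..k - 1}"
  shows "b v \<le> v * (k - v)"
proof -
  obtain f where inj: "inj_on f (lower_class k b)"
    and ed: "\<forall>d \<in> lower_class k b. f d \<in> upper_class k \<and> B_edge (f d) d"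
    using m unfolding matching_sequence_def by blast
  let ?L = "(\<lambda>t. (v, t)) ` {1..b v}"
  have Lsub: "?L \<subseteq> lower_class k b" using v by (auto simp: lower_class_def)
  have cL: "card ?L = b v" by (simp add: card_image inj_on_def)
  have img: "f ` ?L \<subseteq> {1..v} \<times> {v..k-1}"
  proof
    fix x assume "x \<in> f ` ?L"
    then obtain t where t: "t \<in> {1..b v}" and x: "x = f (v,t)" by auto
    have "(v,t) \<in> lower_class k b" using Lsub t by auto
    with ed have "f (v,t) \<in> upper_class k" "B_edge (f (v,t)) (v,t)" by auto
    then show "x \<in> {1..v} \<times> {v..k-1}" using x
      by (cases "f (v,t)") (auto simp: upper_class_def B_edge_def)
  qed
  have "card (f ` ?L) = b v"
    using cL card_image inj_on_subset[OF inj Lsub] by metis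
  moreover have "card (f ` ?L) \<le> card ({1..v} \<times> {v..k-1})"
    by (rule card_mono[OF _ img]) simp
  moreover have "card ({1..v} \<times> {v..k-1}) = v * (k - v)"
  proof -
    have e: "Suc (k - Suc 0) - v = k - v" using v by auto
    show ?thesis using e by (simp add: card_cartesian_product)
  qed
  ultimately show ?thesis by linarith
qed

lemma gauss1: "2 * (\<Sum>i = 1..<v. i) = v * (v - (1::nat))"
proof (induction v)
  case 0 then show ?case by simp
next
  case (Suc v) then show ?case
    by (cases v) (auto simp: sum.op_ivl_Suc algebra_simps)
qed

lemma gauss2: "2 * (\<Sum>i = Suc v..<v + n. i - v) = n * (n - (1::nat))"
proof (induction n)
  case 0 then show ?case by simp
next
  case (Suc n) then show ?case
    by (cases n) (auto simp: sum.op_ivl_Suc algebra_simps)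
qed

lemma sumB:
  assumes v: "1 \<le> v" "v \<le> k - 1"
  shows "(\<Sum>i = 1..k - 1. (if i < v then i else if i = v then v * (k - v) else k - i)) = k choose 2"
proof -
  define g where "g = (\<lambda>i. if i < v then i else if i = v then v * (k - v) else k - i)"
  define n where "n = k - v"
  have n: "k = v + n" "n \<ge> 1" using v unfolding n_def by arith+
  have iv: "{1..k-1} = {1..<k}" using v by auto
  have s1: "sum g {1..<k} = sum g {1..<v} + sum g {v..<k}"
    using v by (simp add: sum.atLeastLessThan_concat)
  have s2: "sum g {v..<k} = g v + sum g {Suc v..<k}"
    using v n by (simp add: sum.atLeast_Suc_lessThan)
  have a1: "sum g {1..<v} = (\<Sum>i = 1..<v. i)" by (rule sum.cong) (auto simp: g_def)
  have a2: "sum g {Suc v..<k} = (\<Sum>i = Suc v..<v + n. (v+n) - i)" by (rule sum.cong) (auto simp: g_def n)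
  also have "\<dots> = (\<Sum>i = Suc v..<v + n. i - v)"
  proof -
    have "(\<Sum>i = Suc v..<v + n. (v+n) - i) = (\<Sum>i = Suc v..<v + n. (v+n) - (v + n + Suc v - Suc i))"
      by (rule sum.atLeastLessThan_rev)
    also have "\<dots> = (\<Sum>i = Suc v..<v + n. i - v)" by (rule sum.cong) auto
    finally show ?thesis .
  qed
  finally have a2': "sum g {Suc v..<k} = (\<Sum>i = Suc v..<v + n. i - v)" .
  have gv: "g v = v * n" by (simp add: g_def n)
  have "2 * sum g {1..k-1} = v * (v - 1) + 2 * (v * n) + n * (n - 1)"
    using iv s1 s2 a1 a2' gv gauss1[of v] gauss2[of v n] by simp
  also have "\<dots> = k * (k - 1)"
  proof -
    obtain a c where ac: "v = Suc a" "n = Suc c" using v n by (cases v; cases n) auto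
    show ?thesis unfolding n(1) ac by (simp add: algebra_simps)
  qed
  finally have "2 * sum g {1..k-1} = k * (k - 1)" .
  then show ?thesis unfolding g_def[symmetric] choose_two by simp
qed

lemma matchB:
  assumes v: "1 \<le> v" "v \<le> k - 1"
  shows "matching_sequence k (\<lambda>i. if i < v then i else if i = v then v * (k - v) else k - i)"
proof -
  define b where "b = (\<lambda>i. if i < v then i else if i = v then v * (k - v) else k - i)"
  define n where "n = k - v"
  have n: "k = v + n" "n \<ge> 1" using v unfolding n_def by arith+
  define f where "f = (\<lambda>(i::nat,t::nat). if i < v then (t,i) else if i = v
     then ((t-1) div n + 1, v + (t-1) mod n) else (i, i+t-1))"
  have ok: "f d \<in> upper_class k \<and> B_edge (f d) d" if d: "d \<in> lower_class k b" for d
  proof -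
    obtain i t where it: "d = (i,t)" "1 \<le> i" "i \<le> k-1" "1 \<le> t" "t \<le> b i"
      using d by (auto simp: lower_class_def)
    consider "i < v" | "i = v" | "i > v" by linarith
    then show ?thesis
    proof cases
      case 1 then show ?thesis using it by (auto simp: f_def b_def upper_class_def B_edge_def)
    next
      case 2
      have "t - 1 < v * n" using it 2 n by (simp add: b_def)
      then have "(t-1) div n < v" by (intro less_mult_imp_div_less) (simp add: mult.commute)
      moreover have "(t-1) mod n < n" using n by simp
      then have "v + (t-1) mod n \<le> v + n - 1" by linarith
      ultimately show ?thesis using it 2 n by (auto simp: f_def upper_class_def B_edge_def)
    next
      case 3 then show ?thesis using it by (auto simp: f_def b_def upper_class_def B_edge_def)
    qed
  qed
  have inj: "inj_on f (lower_class k b)"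
  proof (rule inj_onI)
    fix x y assume x: "x \<in> lower_class k b" and y: "y \<in> lower_class k b" and e: "f x = f y"
    obtain i t where it: "x = (i,t)" "1 \<le> t" using x by (auto simp: lower_class_def)
    obtain i' t' where it': "y = (i',t')" "1 \<le> t'" using y by (auto simp: lower_class_def)
    have cls: "(i < v \<longleftrightarrow> snd (f (i,t)) < v) \<and> (i > v \<longleftrightarrow> fst (f (i,t)) > v)"
      if "(i,t) \<in> lower_class k b" for i t
    proof -
      have "B_edge (f (i,t)) (i,t)" using ok that by blast
      then show ?thesis by (auto simp: f_def B_edge_def split: if_splits)
    qed
    have "i < v \<longleftrightarrow> i' < v" "i > v \<longleftrightarrow> i' > v"
      using cls[of i t] cls[of i' t'] e it it' x y by metis+
    then consider "i < v" "i' < v" | "i = v" "i' = v" | "i > v" "i' > v" by linarith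
    then show "x = y"
    proof cases
      case 1 then show ?thesis using e it it' by (auto simp: f_def)
    next
      case 2
      then have "(t-1) div n = (t'-1) div n" "(t-1) mod n = (t'-1) mod n"
        using e it it' by (auto simp: f_def)
      then have "t - 1 = t' - 1" by (metis div_mult_mod_eq)
      then show ?thesis using 2 it it' by simp
    next
      case 3 then show ?thesis using e it it' by (auto simp: f_def)
    qed
  qed
  show ?thesis unfolding b_def[symmetric] matching_sequence_def using inj ok by blast
qed

theorem mainTheorem8:
  fixes k :: nat
  assumes "k \<ge> 2"
  shows "(\<forall>b. perfect_matching_sequence k b \<longrightarrow>
            (\<forall>v \<in> {1..k - 1}. b v \<le> v * (k - v)))
       \<and> (\<forall>v \<in> {1..k - 1}. perfect_matching_sequence k
            (\<lambda>i. if i < v then i else if i = v then v * (k - v) else k - i))"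
  using partA matchB sumB unfolding perfect_matching_sequence_def by auto

end
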